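(* Let $1\le p\ne q<\infty$ and let $T\in B(\ell^p)$, $S\in B(\ell^q)$. If $T$ or $S$ is compact, then $T$ and $S$ are not equivalent after extension.
   Context: $\ell^p=\ell^p(\mathbb N)$ over $\mathbb C$; $B(X,Y)$ denotes bounded linear operators; invertibility means bounded inverse; $X\oplus Y$ is the $\ell^2$-direct sum and $\mathrm{id}_X$ the identity. Operators $T\in B(X)$ and $S\in B(Y)$ are equivalent after extension if there exist Banach spaces $X'$, $Y'$ and invertible $E\in B(Y\oplus Y',X\oplus X')$, $F\in B(X\oplus X',Y\oplus Y')$ with $\begin{bmatrix}T&0\\0&\mathrm{id}_{X'}\end{bmatrix}=E\begin{bmatrix}S&0\\0&\mathrm{id}_{Y'}\end{bmatrix}F$. *)

theory Defs
  imports "HOL-Analysis.Analysis"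
begin

text \<open>HOL has no class of complex vector spaces; a complex Banach space is a real
Banach space with a scalar multiplication by complex numbers that extends the real one
and is absolutely homogeneous for the norm.\<close>

class complex_banach = banach +
  fixes cscale :: "complex \<Rightarrow> 'a \<Rightarrow> 'a"
  assumes cscale_add_right: "cscale a (x + y) = cscale a x + cscale a y"
    and cscale_add_left: "cscale (a + b) x = cscale a x + cscale b x"
    and cscale_assoc: "cscale a (cscale b x) = cscale (a * b) x"
    and cscale_one: "cscale 1 x = x"
    and cscale_of_real: "cscale (complex_of_real r) x = scaleR r x"
    and norm_cscale: "norm (cscale a x) = norm a * norm x"

instantiation complex :: complex_banach
begin
definition cscale_complex :: "complex \<Rightarrow> complex \<Rightarrow> complex" where
  "cscale_complex a x = a * x"
instance
  by standard (auto simp: cscale_complex_def algebra_simps norm_mult scaleR_conv_of_real)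
end

definition lp :: "real \<Rightarrow> (nat \<Rightarrow> complex) set" where
  "lp p = {f. summable (\<lambda>n. norm (f n) powr p)}"

definition lp_norm :: "real \<Rightarrow> (nat \<Rightarrow> complex) \<Rightarrow> real" where
  "lp_norm p f = (\<Sum>n. norm (f n) powr p) powr (1 / p)"

definition lp_bounded_op :: "real \<Rightarrow> real \<Rightarrow> ((nat \<Rightarrow> complex) \<Rightarrow> (nat \<Rightarrow> complex)) \<Rightarrow> bool" where
  "lp_bounded_op p q T \<longleftrightarrow>
     (\<forall>f\<in>lp p. T f \<in> lp q) \<and>
     (\<forall>f\<in>lp p. \<forall>g\<in>lp p. T (\<lambda>n. f n + g n) = (\<lambda>n. T f n + T g n)) \<and>
     (\<forall>c. \<forall>f\<in>lp p. T (\<lambda>n. c * f n) = (\<lambda>n. c * T f n)) \<and>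
     (\<exists>C. \<forall>f\<in>lp p. lp_norm q (T f) \<le> C * lp_norm p f)"

text \<open>Compact operators on \<open>\<ell>^p\<close>: bounded, and the image of every bounded sequence
has a subsequence converging in \<open>\<ell>^p\<close> (i.e. the image of the unit ball is relatively
compact, as \<open>\<ell>^p\<close> is a metric space).\<close>

definition lp_compact_op :: "real \<Rightarrow> ((nat \<Rightarrow> complex) \<Rightarrow> (nat \<Rightarrow> complex)) \<Rightarrow> bool" where
  "lp_compact_op p T \<longleftrightarrow> lp_bounded_op p p T \<and>
     (\<forall>x :: nat \<Rightarrow> (nat \<Rightarrow> complex).
        (\<forall>k. x k \<in> lp p) \<and> (\<exists>B. \<forall>k. lp_norm p (x k) \<le> B) \<longrightarrow>
        (\<exists>r g. strict_mono r \<and> g \<in> lp p \<and>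
               (\<lambda>k. lp_norm p (\<lambda>n. T (x (r k)) n - g n)) \<longlonglongrightarrow> 0))"

definition ds_carrier :: "real \<Rightarrow> ((nat \<Rightarrow> complex) \<times> 'a::complex_banach) set" where
  "ds_carrier p = lp p \<times> UNIV"

definition ds_norm :: "real \<Rightarrow> (nat \<Rightarrow> complex) \<times> 'a::complex_banach \<Rightarrow> real" where
  "ds_norm p u = sqrt ((lp_norm p (fst u))\<^sup>2 + (norm (snd u))\<^sup>2)"

definition ds_add :: "(nat \<Rightarrow> complex) \<times> 'a::complex_banach \<Rightarrow> (nat \<Rightarrow> complex) \<times> 'a \<Rightarrow> (nat \<Rightarrow> complex) \<times> 'a" where
  "ds_add u v = ((\<lambda>n. fst u n + fst v n), snd u + snd v)"

definition ds_scale :: "complex \<Rightarrow> (nat \<Rightarrow> complex) \<times> 'a::complex_banach \<Rightarrow> (nat \<Rightarrow> complex) \<times> 'a" where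
  "ds_scale c u = ((\<lambda>n. c * fst u n), cscale c (snd u))"

definition ds_bounded_op :: "real \<Rightarrow> real \<Rightarrow>
    ((nat \<Rightarrow> complex) \<times> 'a::complex_banach \<Rightarrow> (nat \<Rightarrow> complex) \<times> 'b::complex_banach) \<Rightarrow> bool" where
  "ds_bounded_op p q E \<longleftrightarrow>
     (\<forall>u\<in>ds_carrier p. E u \<in> ds_carrier q) \<and>
     (\<forall>u\<in>ds_carrier p. \<forall>v\<in>ds_carrier p. E (ds_add u v) = ds_add (E u) (E v)) \<and>
     (\<forall>c. \<forall>u\<in>ds_carrier p. E (ds_scale c u) = ds_scale c (E u)) \<and>
     (\<exists>C. \<forall>u\<in>ds_carrier p. ds_norm q (E u) \<le> C * ds_norm p u)"

definition ds_invertible :: "real \<Rightarrow> real \<Rightarrow>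
    ((nat \<Rightarrow> complex) \<times> 'a::complex_banach \<Rightarrow> (nat \<Rightarrow> complex) \<times> 'b::complex_banach) \<Rightarrow> bool" where
  "ds_invertible p q E \<longleftrightarrow> ds_bounded_op p q E \<and>
     (\<exists>G :: (nat \<Rightarrow> complex) \<times> 'b \<Rightarrow> (nat \<Rightarrow> complex) \<times> 'a.
        ds_bounded_op q p G \<and>
        (\<forall>u\<in>ds_carrier p. G (E u) = u) \<and> (\<forall>v\<in>ds_carrier q. E (G v) = v))"

definition ds_diag :: "((nat \<Rightarrow> complex) \<Rightarrow> (nat \<Rightarrow> complex)) \<Rightarrow> (nat \<Rightarrow> complex) \<times> 'a \<Rightarrow> (nat \<Rightarrow> complex) \<times> 'a" where
  "ds_diag T u = (T (fst u), snd u)"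

text \<open>\<open>E\<close>, \<open>F\<close> witness that \<open>T \<in> B(\<ell>^p)\<close> and \<open>S \<in> B(\<ell>^q)\<close> are equivalent after
extension via the extension spaces \<open>X'\<close> (type \<open>'x\<close>) and \<open>Y'\<close> (type \<open>'y\<close>):
\<open>E \<in> B(\<ell>^q \<oplus> Y', \<ell>^p \<oplus> X')\<close>, \<open>F \<in> B(\<ell>^p \<oplus> X', \<ell>^q \<oplus> Y')\<close> invertible and
\<open>T \<oplus> id = E (S \<oplus> id) F\<close>.\<close>

definition eae_witness :: "real \<Rightarrow> real \<Rightarrow>
    ((nat \<Rightarrow> complex) \<Rightarrow> (nat \<Rightarrow> complex)) \<Rightarrow> ((nat \<Rightarrow> complex) \<Rightarrow> (nat \<Rightarrow> complex)) \<Rightarrow>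
    ((nat \<Rightarrow> complex) \<times> 'y::complex_banach \<Rightarrow> (nat \<Rightarrow> complex) \<times> 'x::complex_banach) \<Rightarrow>
    ((nat \<Rightarrow> complex) \<times> 'x \<Rightarrow> (nat \<Rightarrow> complex) \<times> 'y) \<Rightarrow> bool" where
  "eae_witness p q T S E F \<longleftrightarrow>
     ds_invertible q p E \<and> ds_invertible p q F \<and>
     (\<forall>u\<in>ds_carrier p. ds_diag T u = E (ds_diag S (F u)))"

end

theory Submission
  imports Defs
begin



lemma lp_norm_nonneg: "0 \<le> lp_norm r f"
  by (simp add: lp_norm_def)

lemma lp_summable: "f \<in> lp r \<Longrightarrow> summable (\<lambda>n. norm (f n) powr r)"
  by (simp add: lp_def)

lemma lp_sum_nonneg: "f \<in> lp r \<Longrightarrow> 0 \<le> (\<Sum>n. norm (f n) powr r)"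
  by (simp add: lp_def suminf_nonneg)

lemma lp_norm_powr: assumes "f \<in> lp r" "r > 0"
  shows "lp_norm r f powr r = (\<Sum>n. norm (f n) powr r)"
  using lp_sum_nonneg[OF assms(1)] assms(2)
  by (simp add: lp_norm_def powr_powr powr_one)

lemma convex_pt:
  fixes x y l r :: real
  assumes "0 \<le> x" "0 \<le> y" "0 \<le> l" "l \<le> 1" "1 \<le> r"
  shows "(l*x + (1-l)*y) powr r \<le> l * x powr r + (1-l) * y powr r"
proof (cases "x > 0 \<and> y > 0")
  case True
  have "((1 - (1-l)) *\<^sub>R x + (1-l) *\<^sub>R y) powr r \<le> (1 - (1-l)) * x powr r + (1-l) * y powr r"
    using convex_onD[OF powr_convex[OF assms(5)], of "1-l" x y] True assms by auto
  then show ?thesis by simp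
next
  case False
  have pw: "a powr r \<le> a" if "0 \<le> a" "a \<le> 1" for a :: real
  proof (cases "a = 0")
    case False
    then have "a powr r \<le> a powr 1" using that assms by (intro powr_mono') auto
    then show ?thesis using that by simp
  qed simp
  have "x = 0 \<or> y = 0" using False assms by auto
  then show ?thesis
  proof
    assume x0: "x = 0"
    have "((1-l)*y) powr r = (1-l) powr r * y powr r" using assms by (simp add: powr_mult)
    also have "\<dots> \<le> (1-l) * y powr r" using pw[of "1-l"] assms by (intro mult_right_mono) auto
    finally show ?thesis using x0 assms by simp
  next
    assume y0: "y = 0"
    have "(l*x) powr r = l powr r * x powr r" using assms by (simp add: powr_mult)
    also have "\<dots> \<le> l * x powr r" using pw[of "l"] assms by (intro mult_right_mono) auto
    finally show ?thesis using y0 assms by simp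
  qed
qed

lemma lp_zero_norm:
  assumes "f \<in> lp r" "lp_norm r f = 0" "r > 0"
  shows "f n = 0"
proof -
  have "(\<Sum>n. norm (f n) powr r) = 0"
    using lp_norm_powr[OF assms(1,3)] assms(2,3) by simp
  then have "\<forall>n. norm (f n) powr r = 0"
    using suminf_eq_zero_iff[OF lp_summable[OF assms(1)]] by simp
  then show ?thesis by simp
qed

lemma minkowski:
  assumes f: "f \<in> lp r" and g: "g \<in> lp r" and r: "1 \<le> r"
  shows "(\<lambda>n. f n + g n) \<in> lp r \<and> lp_norm r (\<lambda>n. f n + g n) \<le> lp_norm r f + lp_norm r g"
proof (cases "lp_norm r f = 0 \<or> lp_norm r g = 0")
  case True
  then show ?thesis
  proof
    assume "lp_norm r f = 0"
    then have "\<And>n. f n = 0" using lp_zero_norm[OF f] r by auto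
    then show ?thesis using g by (simp add: lp_norm_nonneg)
  next
    assume "lp_norm r g = 0"
    then have "\<And>n. g n = 0" using lp_zero_norm[OF g] r by auto
    then show ?thesis using f by (simp add: lp_norm_nonneg)
  qed
next
  case False
  define A where "A = lp_norm r f"
  define B where "B = lp_norm r g"
  have A: "A > 0" and B: "B > 0" using False lp_norm_nonneg A_def B_def
    by (metis order_le_imp_less_or_eq)+
  define l where "l = A / (A + B)"
  have l: "0 \<le> l" "l \<le> 1" "1 - l = B / (A+B)" using A B by (auto simp: l_def field_simps)
  have bound: "norm (f n + g n) powr r \<le> (A+B) powr r * (l * (norm (f n) / A) powr r + (1-l) * (norm (g n) / B) powr r)" for n
  proof -
    have "norm (f n + g n) \<le> norm (f n) + norm (g n)" by (rule norm_triangle_ineq)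
    also have "\<dots> = (A+B) * (l * (norm (f n) / A) + (1-l) * (norm (g n) / B))"
    proof -
      have "(A+B) * (l * (norm (f n) / A)) = norm (f n)" using A B by (simp add: l_def)
      moreover have "(A+B) * ((1-l) * (norm (g n) / B)) = norm (g n)" using A B l(3) by simp
      ultimately show ?thesis by (simp add: distrib_left)
    qed
    finally have "norm (f n + g n) powr r \<le> ((A+B) * (l * (norm (f n) / A) + (1-l) * (norm (g n) / B))) powr r"
      using r by (intro powr_mono2) auto
    also have "\<dots> = (A+B) powr r * (l * (norm (f n) / A) + (1-l) * (norm (g n) / B)) powr r"
      using A B l by (subst powr_mult) auto
    also have "\<dots> \<le> (A+B) powr r * (l * (norm (f n) / A) powr r + (1-l) * (norm (g n) / B) powr r)"
      using A B l r by (intro mult_left_mono convex_pt) auto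
    finally show ?thesis .
  qed
  have sf: "summable (\<lambda>n. (norm (f n) / A) powr r)"
    using summable_divide[OF lp_summable[OF f], of "A powr r"] A by (simp add: powr_divide)
  have sg: "summable (\<lambda>n. (norm (g n) / B) powr r)"
    using summable_divide[OF lp_summable[OF g], of "B powr r"] B by (simp add: powr_divide)
  have sR: "summable (\<lambda>n. (A+B) powr r * (l * (norm (f n) / A) powr r + (1-l) * (norm (g n) / B) powr r))"
    by (intro summable_mult summable_add sf sg)
  have sumf: "(\<Sum>n. (norm (f n) / A) powr r) = 1"
  proof -
    have "(\<Sum>n. (norm (f n) / A) powr r) = (\<Sum>n. norm (f n) powr r) / A powr r"
      using A by (simp add: powr_divide suminf_divide[OF lp_summable[OF f]])
    also have "(\<Sum>n. norm (f n) powr r) = A powr r" using lp_norm_powr[OF f] r unfolding A_def by simp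
    also have "A powr r / A powr r = 1" using A by simp
    finally show ?thesis .
  qed
  have sumg: "(\<Sum>n. (norm (g n) / B) powr r) = 1"
  proof -
    have "(\<Sum>n. (norm (g n) / B) powr r) = (\<Sum>n. norm (g n) powr r) / B powr r"
      using B by (simp add: powr_divide suminf_divide[OF lp_summable[OF g]])
    also have "(\<Sum>n. norm (g n) powr r) = B powr r" using lp_norm_powr[OF g] r unfolding B_def by simp
    also have "B powr r / B powr r = 1" using B by simp
    finally show ?thesis .
  qed
  have sfg: "summable (\<lambda>n. norm (f n + g n) powr r)"
    by (rule summable_comparison_test'[OF sR]) (use bound in auto)
  have "(\<Sum>n. norm (f n + g n) powr r) \<le> (\<Sum>n. (A+B) powr r * (l * (norm (f n) / A) powr r + (1-l) * (norm (g n) / B) powr r))"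
    by (rule suminf_le[OF bound sfg sR])
  also have "\<dots> = (A+B) powr r * (l * 1 + (1-l) * 1)"
    using suminf_mult[OF summable_add[OF summable_mult[OF sf, of l] summable_mult[OF sg, of "1-l"]], of "(A+B) powr r"]
      suminf_add[OF summable_mult[OF sf, of l] summable_mult[OF sg, of "1-l"]]
      suminf_mult[OF sf, of l] suminf_mult[OF sg, of "1-l"] sumf sumg by simp
  also have "\<dots> = (A+B) powr r" by simp
  finally have le: "(\<Sum>n. norm (f n + g n) powr r) \<le> (A+B) powr r" .
  have "lp_norm r (\<lambda>n. f n + g n) = (\<Sum>n. norm (f n + g n) powr r) powr (1/r)" by (simp add: lp_norm_def)
  also have "\<dots> \<le> ((A+B) powr r) powr (1/r)"
    using le r suminf_nonneg[OF sfg] by (intro powr_mono2) auto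
  also have "\<dots> = A + B" using A B r by (simp add: powr_powr)
  finally show ?thesis using sfg by (simp add: lp_def A_def B_def)
qed




lemma lp_minus: "f \<in> lp r \<Longrightarrow> (\<lambda>n. - f n) \<in> lp r \<and> lp_norm r (\<lambda>n. - f n) = lp_norm r f"
  by (simp add: lp_def lp_norm_def)

lemma minkowski_diff:
  assumes "f \<in> lp r" "g \<in> lp r" "1 \<le> r"
  shows "(\<lambda>n. f n - g n) \<in> lp r \<and> lp_norm r (\<lambda>n. f n - g n) \<le> lp_norm r f + lp_norm r g"
  using minkowski[OF assms(1) conjunct1[OF lp_minus[OF assms(2)]] assms(3)] lp_minus[OF assms(2)]
  by simp

lemma lp_mono:
  assumes g: "g \<in> lp r" and le: "\<And>n. norm (f n) \<le> norm (g n)" and r: "r > 0"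
  shows "f \<in> lp r \<and> lp_norm r f \<le> lp_norm r g"
proof -
  have b: "norm (f n) powr r \<le> norm (g n) powr r" for n using le r by (intro powr_mono2) auto
  have s: "summable (\<lambda>n. norm (f n) powr r)"
    by (rule summable_comparison_test'[OF lp_summable[OF g]]) (use b in auto)
  have "(\<Sum>n. norm (f n) powr r) \<le> (\<Sum>n. norm (g n) powr r)"
    by (rule suminf_le[OF b s lp_summable[OF g]])
  then have "lp_norm r f \<le> lp_norm r g" unfolding lp_norm_def
    using r suminf_nonneg[OF s] by (intro powr_mono2) auto
  then show ?thesis using s by (simp add: lp_def)
qed

lemma lp_coord:
  assumes f: "f \<in> lp r" and r: "r > 0"
  shows "norm (f i) \<le> lp_norm r f"
proof -
  have "norm (f i) powr r \<le> (\<Sum>n. norm (f n) powr r)"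
    using sum_le_suminf[OF lp_summable[OF f], of "{i}"] by simp
  then have "(norm (f i) powr r) powr (1/r) \<le> (\<Sum>n. norm (f n) powr r) powr (1/r)"
    using r by (intro powr_mono2) auto
  then show ?thesis using r by (simp add: powr_powr lp_norm_def)
qed

lemma lp_indicator:
  assumes A: "finite A" and f: "\<And>n. norm (f n) = (if n \<in> A then 1 else 0)" and r: "r > 0"
  shows "f \<in> lp r \<and> lp_norm r f = real (card A) powr (1/r)"
proof -
  have e: "(\<lambda>n. norm (f n) powr r) = (\<lambda>n. if n \<in> A then 1 else 0)"
    using f by (auto simp: fun_eq_iff)
  have "(\<lambda>n. if n \<in> A then 1 else 0 :: real) sums (\<Sum>n\<in>A. 1)"
    by (rule sums_If_finite_set[OF A, of "\<lambda>_. 1", simplified])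
  then have "(\<lambda>n. norm (f n) powr r) sums real (card A)" using e by simp
  then show ?thesis unfolding lp_def lp_norm_def by (auto simp: sums_iff)
qed

lemma lp_sum_fin:
  fixes f :: "nat \<Rightarrow> nat \<Rightarrow> complex" and N :: nat
  assumes "\<And>j. j < N \<Longrightarrow> f j \<in> lp r" "1 \<le> r"
  shows "(\<lambda>n. \<Sum>j<N. f j n) \<in> lp r \<and> lp_norm r (\<lambda>n. \<Sum>j<N. f j n) \<le> (\<Sum>j<N. lp_norm r (f j))"
  using assms(1)
proof (induction N)
  case 0
  then show ?case by (simp add: lp_def lp_norm_def)
next
  case (Suc N)
  then have ih: "(\<lambda>n. \<Sum>j<N. f j n) \<in> lp r \<and> lp_norm r (\<lambda>n. \<Sum>j<N. f j n) \<le> (\<Sum>j<N. lp_norm r (f j))"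
    by auto
  have "f N \<in> lp r" using Suc by auto
  from minkowski[OF conjunct1[OF ih] this assms(2)] ih show ?case by simp
qed

lemma lp_disjoint_sum:
  fixes f :: "nat \<Rightarrow> nat \<Rightarrow> complex" and N :: nat
  assumes b: "\<And>j. j < N \<Longrightarrow> f j \<in> lp r" and r: "r > 0"
    and d: "\<And>n j k. j < N \<Longrightarrow> k < N \<Longrightarrow> j \<noteq> k \<Longrightarrow> f j n \<noteq> 0 \<Longrightarrow> f k n = 0"
  shows "(\<lambda>n. \<Sum>j<N. f j n) \<in> lp r \<and> lp_norm r (\<lambda>n. \<Sum>j<N. f j n) = (\<Sum>j<N. lp_norm r (f j) powr r) powr (1/r)"
proof -
  have pt: "norm (\<Sum>j<M. f j n) powr r = (\<Sum>j<M. norm (f j n) powr r)" if "M \<le> N" for M :: nat and n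
    using that
  proof (induction M)
    case 0
    then show ?case using r by simp
  next
    case (Suc M)
    show ?case
    proof (cases "f M n = 0")
      case True
      then show ?thesis using Suc r by simp
    next
      case False
      then have z: "\<And>j. j < M \<Longrightarrow> f j n = 0" using d[of M _ n] Suc by auto
      then show ?thesis using Suc by simp
    qed
  qed
  have e: "(\<lambda>n. norm (\<Sum>j<N. f j n) powr r) = (\<lambda>n. \<Sum>j<N. norm (f j n) powr r)"
    using pt by auto
  have "(\<lambda>n. \<Sum>j<N. norm (f j n) powr r) sums (\<Sum>j<N. (\<Sum>n. norm (f j n) powr r))"
    by (rule sums_sum) (use b lp_summable summable_sums in blast)
  then have "(\<lambda>n. norm (\<Sum>j<N. f j n) powr r) sums (\<Sum>j<N. lp_norm r (f j) powr r)"
    using e lp_norm_powr[OF b r] by simp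
  then show ?thesis unfolding lp_def lp_norm_def by (auto simp: sums_iff)
qed




lemma cscale_zero: "cscale c (0::'a::complex_banach) = 0"
  using norm_cscale[of c "0::'a"] by simp

lemma cscale_m1: "cscale (-1) (y::'a::complex_banach) = - y"
  using cscale_of_real[of "-1" y] by simp

lemma ds_norm_ge: "lp_norm r a \<le> ds_norm r (a, y)"
  unfolding ds_norm_def using lp_norm_nonneg[of r a]
  by (simp add: real_le_rsqrt)

lemma ds_norm_le: "ds_norm r (a, y) \<le> lp_norm r a + norm y"
  unfolding ds_norm_def using lp_norm_nonneg[of r a] norm_ge_zero[of y]
  by (intro real_le_lsqrt) (auto simp: power2_eq_square algebra_simps)

lemma ds_norm_0: "ds_norm r (a, 0) = lp_norm r a"
  unfolding ds_norm_def using lp_norm_nonneg[of r a] by simp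

lemma ds_diff: "ds_add (a, x) (ds_scale (-1) (b, y)) = ((\<lambda>n. a n - b n), x - (y::'a::complex_banach))"
  by (simp add: ds_add_def ds_scale_def cscale_m1)

lemma lin_diff:
  assumes H: "ds_bounded_op p q H" and u: "u \<in> ds_carrier p" and v: "v \<in> ds_carrier p"
  shows "H (ds_add u (ds_scale (-1) v)) = ds_add (H u) (ds_scale (-1) (H v))"
proof -
  have "ds_scale (-1) v \<in> ds_carrier p"
    using v lp_minus[of "fst v" p] by (auto simp: ds_carrier_def ds_scale_def)
  moreover have "H (ds_scale (-1) v) = ds_scale (-1) (H v)" using H v by (simp add: ds_bounded_op_def)
  ultimately show ?thesis using H u by (simp add: ds_bounded_op_def)
qed

lemma lin_add:
  assumes H: "ds_bounded_op p q H" and u: "u \<in> ds_carrier p" and v: "v \<in> ds_carrier p"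
  shows "H (ds_add u v) = ds_add (H u) (H v)"
  using assms by (simp add: ds_bounded_op_def)

lemma ds_bound:
  assumes H: "ds_bounded_op p q H"
  shows "\<exists>C\<ge>1. \<forall>u\<in>ds_carrier p. ds_norm q (H u) \<le> C * ds_norm p u"
proof -
  obtain C where C: "\<forall>u\<in>ds_carrier p. ds_norm q (H u) \<le> C * ds_norm p u"
    using H by (auto simp: ds_bounded_op_def)
  have "ds_norm q (H u) \<le> max C 1 * ds_norm p u" if "u \<in> ds_carrier p" for u
  proof -
    have "0 \<le> ds_norm p u" by (simp add: ds_norm_def)
    then have "C * ds_norm p u \<le> max C 1 * ds_norm p u" by (intro mult_right_mono) auto
    then show ?thesis using C that by force
  qed
  then show ?thesis by (intro exI[of _ "max C 1"]) auto
qed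

lemma phi_lemma:
  fixes F :: "(nat \<Rightarrow> complex) \<times> 'x::complex_banach \<Rightarrow> (nat \<Rightarrow> complex) \<times> 'y::complex_banach"
    and GE :: "(nat \<Rightarrow> complex) \<times> 'x \<Rightarrow> (nat \<Rightarrow> complex) \<times> 'y"
  assumes GE: "ds_bounded_op p q GE" and T: "lp_bounded_op p p T" and p: "1 \<le> p"
    and rel: "\<forall>e\<in>lp p. snd (F (e, 0)) = snd (GE (T e, 0))"
  shows "\<exists>K. \<forall>e\<in>lp p. \<forall>e'\<in>lp p. norm (snd (F (e,0)) - snd (F (e',0))) \<le> K * lp_norm p (\<lambda>n. T e n - T e' n)"
proof -
  obtain K where K: "\<forall>u\<in>ds_carrier p. ds_norm q (GE u) \<le> K * ds_norm p u"
    using GE by (auto simp: ds_bounded_op_def)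
  have "norm (snd (F (e,0)) - snd (F (e',0))) \<le> K * lp_norm p (\<lambda>n. T e n - T e' n)"
    if e: "e \<in> lp p" and e': "e' \<in> lp p" for e e'
  proof -
    have Te: "T e \<in> lp p" "T e' \<in> lp p" using T e e' by (auto simp: lp_bounded_op_def)
    have c: "(T e, 0::'x) \<in> ds_carrier p" "(T e', 0::'x) \<in> ds_carrier p" using Te by (auto simp: ds_carrier_def)
    have d: "(\<lambda>n. T e n - T e' n) \<in> lp p" using minkowski_diff[OF Te p] by simp
    have eq: "GE (\<lambda>n. T e n - T e' n, 0) = ds_add (GE (T e, 0)) (ds_scale (-1) (GE (T e', 0)))"
    proof -
      have dd: "ds_add (T e, 0::'x) (ds_scale (-1) (T e', 0)) = (\<lambda>n. T e n - T e' n, 0)"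
        using ds_diff[of "T e" 0 "T e'" "0::'x"] by simp
      show ?thesis using lin_diff[OF GE c] unfolding dd .
    qed
    have "snd (F (e,0)) - snd (F (e',0)) = snd (GE (T e, 0)) - snd (GE (T e', 0))" using rel e e' by simp
    also have "\<dots> = snd (GE (\<lambda>n. T e n - T e' n, 0))"
      using eq by (simp add: ds_add_def ds_scale_def cscale_m1)
    finally have "norm (snd (F (e,0)) - snd (F (e',0))) = norm (snd (GE (\<lambda>n. T e n - T e' n, 0)))" by simp
    also have "\<dots> \<le> ds_norm q (GE (\<lambda>n. T e n - T e' n, 0))"
      unfolding ds_norm_def by (simp add: real_le_rsqrt)
    also have "\<dots> \<le> K * ds_norm p ((\<lambda>n. T e n - T e' n), 0::'x)"
      using K d by (auto simp: ds_carrier_def)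
    also have "\<dots> = K * lp_norm p (\<lambda>n. T e n - T e' n)" by (simp add: ds_norm_0)
    finally show ?thesis .
  qed
  then show ?thesis by blast
qed




lemma finite_coord_subseq:
  fixes h :: "nat \<Rightarrow> nat \<Rightarrow> complex"
  assumes B: "\<And>k i. norm (h k i) \<le> B"
  shows "\<exists>\<sigma>. strict_mono \<sigma> \<and> (\<forall>i<m. convergent (\<lambda>k. h (\<sigma> k) i))"
proof (induction m)
  case 0
  show ?case by (intro exI[of _ id]) (auto simp: strict_mono_def)
next
  case (Suc m)
  then obtain \<sigma> where s: "strict_mono \<sigma>" and c: "\<forall>i<m. convergent (\<lambda>k. h (\<sigma> k) i)" by blast
  have "bounded (range (\<lambda>k. h (\<sigma> k) m))"
    using B by (auto simp: bounded_iff)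
  then obtain l \<tau> where t: "strict_mono \<tau>" and lim: "((\<lambda>k. h (\<sigma> k) m) \<circ> \<tau>) \<longlonglongrightarrow> l"
    using bounded_imp_convergent_subsequence by blast
  have "convergent (\<lambda>k. h ((\<sigma> \<circ> \<tau>) k) i)" if "i < Suc m" for i
  proof (cases "i = m")
    case True
    then show ?thesis using lim by (auto simp: convergent_def o_def)
  next
    case False
    then have "convergent ((\<lambda>k. h (\<sigma> k) i) \<circ> \<tau>)" using c that t
      by (intro convergent_subseq_convergent) auto
    then show ?thesis by (simp add: o_def)
  qed
  moreover have "strict_mono (\<sigma> \<circ> \<tau>)" using s t by (rule strict_mono_o)
  ultimately show ?case by blast
qed

lemma tail_small:
  fixes w :: "nat \<Rightarrow> complex"
  assumes w: "w \<in> lp q" and e: "e > 0"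
  shows "\<exists>M\<ge>m. (\<Sum>i. norm (w (i + M)) powr q) \<le> e"
proof -
  obtain N where N: "\<forall>n\<ge>N. norm (\<Sum>i. norm (w (i + n)) powr q) < e"
    using suminf_exist_split[OF e lp_summable[OF w]] by blast
  have "norm (\<Sum>i. norm (w (i + max N m)) powr q) < e" using N by auto
  then show ?thesis by (intro exI[of _ "max N m"]) auto
qed

lemma geom_sum_le: "(\<Sum>j<N. (1/2::real)^(j+1)) \<le> 1"
proof -
  have "(\<Sum>j<N. (1/2::real)^(j+1)) = 1 - (1/2)^N"
    by (induction N) (auto simp: field_simps)
  then show ?thesis by simp
qed

lemma growth_contra:
  fixes x y a b c :: real
  assumes xy: "y < x" "0 \<le> y" and a: "a > 0" and b: "b \<ge> 0" and c: "c \<ge> 0"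
    and H: "\<And>N::nat. N \<ge> 1 \<Longrightarrow> a * real N powr x \<le> b * real N powr y + c"
  shows False
proof -
  define M where "M = ((b + c) / a + 1) powr (1 / (x - y))"
  define N where "N = nat (ceiling M) + 1"
  have N1: "N \<ge> 1" by (simp add: N_def)
  have NM: "real N \<ge> M" unfolding N_def by linarith
  have M0: "M \<ge> 0" by (simp add: M_def)
  have Ny: "real N powr y \<ge> 1" using N1 xy by (intro ge_one_powr_ge_zero) auto
  have "a * real N powr x \<le> b * real N powr y + c" using H N1 .
  also have "\<dots> \<le> (b + c) * real N powr y" using Ny b c by (simp add: algebra_simps) (metis mult_left_mono mult.right_neutral c)
  finally have 1: "a * real N powr x \<le> (b + c) * real N powr y" .
  have "real N powr x = real N powr (x - y) * real N powr y"
    by (simp add: powr_add[symmetric])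
  with 1 have "a * real N powr (x - y) * real N powr y \<le> (b + c) * real N powr y" by simp
  then have 2: "a * real N powr (x - y) \<le> b + c" using Ny by (smt (verit) mult_right_le_imp_le)
  have "M powr (x - y) \<le> real N powr (x - y)" using NM M0 xy by (intro powr_mono2) auto
  moreover have "M powr (x - y) = (b + c) / a + 1"
    using xy a b c by (simp add: M_def powr_powr)
  ultimately have "(b + c) / a + 1 \<le> real N powr (x - y)" by simp
  then have "a * ((b + c) / a + 1) \<le> a * real N powr (x - y)" using a by simp
  moreover have "a * ((b + c) / a + 1) = b + c + a" using a by (simp add: field_simps)
  ultimately have "b + c + a \<le> a * real N powr (x - y)" by simp
  with 2 a show False by simp
qed




definition ev :: "nat \<Rightarrow> nat \<Rightarrow> complex" where
  "ev k = (\<lambda>n. if n = k then 1 else 0)"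

lemma ev_lp: "r > 0 \<Longrightarrow> ev k \<in> lp r \<and> lp_norm r (ev k) = 1"
  using lp_indicator[of "{k}" "ev k" r] by (simp add: ev_def)

locale coreloc =
  fixes p q :: real and T :: "(nat \<Rightarrow> complex) \<Rightarrow> (nat \<Rightarrow> complex)"
    and F :: "(nat \<Rightarrow> complex) \<times> 'x::complex_banach \<Rightarrow> (nat \<Rightarrow> complex) \<times> 'y::complex_banach"
    and GF :: "(nat \<Rightarrow> complex) \<times> 'y \<Rightarrow> (nat \<Rightarrow> complex) \<times> 'x"
  assumes p: "1 \<le> p" and q: "1 \<le> q" and pq: "p \<noteq> q"
    and Tc: "lp_compact_op p T" and F: "ds_bounded_op p q F" and GF: "ds_bounded_op q p GF"
    and inv: "\<forall>u\<in>ds_carrier p. GF (F u) = u"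
    and Phi: "\<exists>K. \<forall>e\<in>lp p. \<forall>e'\<in>lp p. norm (snd (F (e,0)) - snd (F (e',0))) \<le> K * lp_norm p (\<lambda>n. T e n - T e' n)"
begin

definition z where "z k = fst (F (ev k, 0))"
definition ph where "ph k = snd (F (ev k, 0))"

lemma ev_p: "ev k \<in> lp p" "lp_norm p (ev k) = 1" using ev_lp[of p k] p by auto

lemma Fcar: "u \<in> ds_carrier p \<Longrightarrow> F u \<in> ds_carrier q"
  using F by (simp add: ds_bounded_op_def)

lemma evcar: "(ev k, 0) \<in> ds_carrier p" using ev_p by (simp add: ds_carrier_def)

lemma z_lp: "z k \<in> lp q"
  using Fcar[OF evcar] by (auto simp: z_def ds_carrier_def mem_Times_iff)

lemma Fev: "F (ev k, 0) = (z k, ph k)" by (simp add: z_def ph_def)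

lemma Fd: "F ((\<lambda>n. ev a n - ev b n), 0) = ((\<lambda>n. z a n - z b n), ph a - ph b)"
proof -
  have "F (ds_add (ev a, 0) (ds_scale (-1) (ev b, 0))) = ds_add (F (ev a, 0)) (ds_scale (-1) (F (ev b, 0)))"
    using lin_diff[OF F evcar evcar] .
  moreover have "ds_add (ev a, 0::'x) (ds_scale (-1) (ev b, 0)) = ((\<lambda>n. ev a n - ev b n), 0)"
    using ds_diff[of "ev a" "0::'x" "ev b" 0] by simp
  ultimately show ?thesis using ds_diff[of "z a" "ph a" "z b" "ph b"] by (simp add: Fev)
qed

end




context coreloc begin

definition CF where "CF = (SOME C. C \<ge> 1 \<and> (\<forall>u\<in>ds_carrier p. ds_norm q (F u) \<le> C * ds_norm p u))"
definition CG where "CG = (SOME C. C \<ge> 1 \<and> (\<forall>u\<in>ds_carrier q. ds_norm p (GF u) \<le> C * ds_norm q u))"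

lemma CF: "CF \<ge> 1" "\<And>u. u \<in> ds_carrier p \<Longrightarrow> ds_norm q (F u) \<le> CF * ds_norm p u"
  using someI_ex[OF ds_bound[OF F]] unfolding CF_def by auto

lemma CG: "CG \<ge> 1" "\<And>u. u \<in> ds_carrier q \<Longrightarrow> ds_norm p (GF u) \<le> CG * ds_norm q u"
  using someI_ex[OF ds_bound[OF GF]] unfolding CG_def by auto

lemma lower: "u \<in> ds_carrier p \<Longrightarrow> ds_norm p u \<le> CG * ds_norm q (F u)"
  using CG(2)[OF Fcar] inv by auto

lemma z_bound: "norm (z k i) \<le> CF"
proof -
  have "norm (z k i) \<le> lp_norm q (z k)" using lp_coord[OF z_lp] q by auto
  also have "\<dots> \<le> ds_norm q (F (ev k, 0))" using ds_norm_ge[of q "z k" "ph k"] by (simp add: Fev)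
  also have "\<dots> \<le> CF * ds_norm p (ev k, 0::'x)" using CF(2)[OF evcar] .
  also have "\<dots> = CF" using ev_p by (simp add: ds_norm_0)
  finally show ?thesis .
qed

lemma cpt_ex: "\<exists>x. strict_mono (fst x) \<and> snd x \<in> lp p \<and> (\<lambda>k. lp_norm p (\<lambda>n. T (ev (fst x k)) n - snd x n)) \<longlonglongrightarrow> 0"
proof -
  have "(\<forall>k. ev k \<in> lp p) \<and> (\<exists>B. \<forall>k. lp_norm p (ev k) \<le> B)" using ev_p by auto
  then obtain r g where "strict_mono r \<and> g \<in> lp p \<and> (\<lambda>k. lp_norm p (\<lambda>n. T (ev (r k)) n - g n)) \<longlonglongrightarrow> 0"
    using Tc unfolding lp_compact_op_def by blast
  then show ?thesis by (intro exI[of _ "(r, g)"]) auto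
qed

definition RG where "RG = (SOME x. strict_mono (fst x) \<and> snd x \<in> lp p \<and> (\<lambda>k. lp_norm p (\<lambda>n. T (ev (fst x k)) n - snd x n)) \<longlonglongrightarrow> 0)"
definition r where "r = fst RG"
definition g where "g = snd RG"

lemma RG: "strict_mono r" "g \<in> lp p" "(\<lambda>k. lp_norm p (\<lambda>n. T (ev (r k)) n - g n)) \<longlonglongrightarrow> 0"
  using someI_ex[OF cpt_ex] unfolding RG_def[symmetric] r_def g_def by auto

lemma Tev: "T (ev k) \<in> lp p" using Tc ev_p unfolding lp_compact_op_def lp_bounded_op_def by auto

lemma ph_cauchy:
  assumes e: "e > 0"
  shows "\<exists>K. \<forall>a\<ge>K. \<forall>b\<ge>K. norm (ph (r a) - ph (r b)) \<le> e"
proof -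
  obtain K0 where K0: "\<forall>e\<in>lp p. \<forall>e'\<in>lp p. norm (snd (F (e,0)) - snd (F (e',0))) \<le> K0 * lp_norm p (\<lambda>n. T e n - T e' n)"
    using Phi by blast
  define K1 where "K1 = max K0 1"
  have K1: "K1 \<ge> 1" by (simp add: K1_def)
  have "e / (2 * K1) > 0" using e K1 by simp
  then obtain M where M: "\<forall>k\<ge>M. norm (lp_norm p (\<lambda>n. T (ev (r k)) n - g n) - 0) < e / (2 * K1)"
    using RG(3) unfolding LIMSEQ_def dist_norm by blast
  have "norm (ph (r a) - ph (r b)) \<le> e" if a: "a \<ge> M" and b: "b \<ge> M" for a b
  proof -
    have da: "(\<lambda>n. T (ev (r a)) n - g n) \<in> lp p" using minkowski_diff[OF Tev RG(2) p] by simp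
    have db: "(\<lambda>n. T (ev (r b)) n - g n) \<in> lp p" using minkowski_diff[OF Tev RG(2) p] by simp
    have "lp_norm p (\<lambda>n. T (ev (r a)) n - T (ev (r b)) n)
        = lp_norm p (\<lambda>n. (T (ev (r a)) n - g n) - (T (ev (r b)) n - g n))" by simp
    also have "\<dots> \<le> lp_norm p (\<lambda>n. T (ev (r a)) n - g n) + lp_norm p (\<lambda>n. T (ev (r b)) n - g n)"
      using minkowski_diff[OF da db p] by simp
    also have "\<dots> < e / (2 * K1) + e / (2 * K1)" using M a b lp_norm_nonneg
      by (intro add_strict_mono) (auto simp: abs_if split: if_splits)
    finally have lt: "lp_norm p (\<lambda>n. T (ev (r a)) n - T (ev (r b)) n) < e / K1" by simp
    have "norm (ph (r a) - ph (r b)) \<le> K0 * lp_norm p (\<lambda>n. T (ev (r a)) n - T (ev (r b)) n)"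
      using K0 ev_p unfolding ph_def by blast
    also have "\<dots> \<le> K1 * lp_norm p (\<lambda>n. T (ev (r a)) n - T (ev (r b)) n)"
      using lp_norm_nonneg by (intro mult_right_mono) (auto simp: K1_def)
    also have "\<dots> \<le> K1 * (e / K1)" using lt K1 by (intro mult_left_mono) auto
    also have "\<dots> = e" using K1 by simp
    finally show ?thesis .
  qed
  then show ?thesis by blast
qed

end



context coreloc begin

lemma pair_exists:
  assumes e: "e > 0"
  shows "\<exists>a b. L \<le> a \<and> a < b \<and> norm (ph (r a) - ph (r b)) \<le> e \<and>
     (\<Sum>i<m. norm (z (r a) i - z (r b) i) powr q) \<le> e"
proof -
  obtain \<sigma> where s: "strict_mono \<sigma>" and c: "\<forall>i<m. convergent (\<lambda>k. z (r (\<sigma> k)) i)"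
    using finite_coord_subseq[of "\<lambda>k i. z (r k) i" CF m] z_bound by blast
  define \<delta> where "\<delta> = (e / (m + 1)) powr (1 / q)"
  have d: "\<delta> > 0" using e by (simp add: \<delta>_def)
  have ev1: "eventually (\<lambda>K. \<forall>a\<ge>K. \<forall>b\<ge>K. norm (z (r (\<sigma> a)) i - z (r (\<sigma> b)) i) < \<delta>) sequentially"
    if "i \<in> {..<m}" for i
  proof -
    have "Cauchy (\<lambda>k. z (r (\<sigma> k)) i)" using c that by (auto intro: convergent_Cauchy)
    from CauchyD[OF this d] obtain M where "\<forall>a\<ge>M. \<forall>b\<ge>M. norm (z (r (\<sigma> a)) i - z (r (\<sigma> b)) i) < \<delta>"
      by blast
    then show ?thesis unfolding eventually_sequentially by (intro exI[of _ M]) auto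
  qed
  have ev2: "eventually (\<lambda>K. \<forall>i\<in>{..<m}. \<forall>a\<ge>K. \<forall>b\<ge>K. norm (z (r (\<sigma> a)) i - z (r (\<sigma> b)) i) < \<delta>) sequentially"
    by (rule eventually_ball_finite) (use ev1 in auto)
  obtain K1 where K1: "\<forall>a\<ge>K1. \<forall>b\<ge>K1. norm (ph (r a) - ph (r b)) \<le> e" using ph_cauchy[OF e] by blast
  have ev3: "eventually (\<lambda>K. K \<ge> L \<and> K \<ge> K1) sequentially" by (rule eventually_ge_at_top[of "max L K1", THEN eventually_mono]) auto
  obtain K where K: "\<forall>i\<in>{..<m}. \<forall>a\<ge>K. \<forall>b\<ge>K. norm (z (r (\<sigma> a)) i - z (r (\<sigma> b)) i) < \<delta>" "K \<ge> L" "K \<ge> K1"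
    using eventually_happens'[OF _ eventually_conj[OF ev2 ev3]] by auto
  define a where "a = \<sigma> K"
  define b where "b = \<sigma> (Suc K)"
  have aK: "a \<ge> K" using seq_suble[OF s] by (simp add: a_def)
  have bK: "b \<ge> K" using seq_suble[OF s, of "Suc K"] by (simp add: b_def)
  have ab: "a < b" using s by (simp add: a_def b_def strict_mono_def)
  have ph_ok: "norm (ph (r a) - ph (r b)) \<le> e" using K1 aK bK K by auto
  have "norm (z (r a) i - z (r b) i) powr q \<le> e / (m + 1)" if i: "i \<in> {..<m}" for i
  proof -
    have "norm (z (r a) i - z (r b) i) < \<delta>" using K(1) i unfolding a_def b_def by auto
    then have "norm (z (r a) i - z (r b) i) powr q \<le> \<delta> powr q" using q by (intro powr_mono2) auto
    also have "\<dots> = e / (m + 1)" using e q by (simp add: \<delta>_def powr_powr)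
    finally show ?thesis .
  qed
  then have "(\<Sum>i<m. norm (z (r a) i - z (r b) i) powr q) \<le> real (card {..<m}) * (e / (m + 1))"
    by (intro sum_bounded_above) auto
  also have "\<dots> \<le> e" using e by (simp add: field_simps)
  finally show ?thesis using ph_ok ab aK K(2) by (intro exI[of _ a] exI[of _ b]) auto
qed

end



context coreloc begin

definition c0 where "c0 = 2 powr (1/p) / CG"
definition eta where "eta = min 1 (c0 / 2)"
definition tt where "tt n = (eta * (1/2)^(n+1)) powr q"
definition WW where "WW a b = (\<lambda>i. z (r a) i - z (r b) i)"

lemma c0_pos: "c0 > 0" using CG(1) by (simp add: c0_def)
lemma eta_pos: "eta > 0" using c0_pos by (simp add: eta_def)
lemma tt_pos: "tt n > 0" using eta_pos by (simp add: tt_def)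

lemma WW_lp: "WW a b \<in> lp q" using minkowski_diff[OF z_lp z_lp q] by (simp add: WW_def)

definition Pn where "Pn n x = (case x of (a, b, lo, hi) \<Rightarrow>
   a < b \<and> lo \<le> hi \<and> norm (ph (r a) - ph (r b)) \<le> eta * (1/2)^(n+1) \<and>
   (\<Sum>i<lo. norm (WW a b i) powr q) \<le> tt n / 2 \<and>
   (\<Sum>i. norm (WW a b (i + hi)) powr q) \<le> tt n / 2)"

definition Qn where "Qn n x y = (case x of (a, b, lo, hi) \<Rightarrow> case y of (a', b', lo', hi') \<Rightarrow>
   b < a' \<and> hi \<le> lo')"

lemma step_ex: "\<exists>a b lo hi. Pn n (a, b, lo, hi) \<and> L \<le> a \<and> m \<le> lo"
proof -
  define e where "e = min (eta * (1/2)^(n+1)) (tt n / 2)"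
  have e: "e > 0" using eta_pos tt_pos by (simp add: e_def)
  obtain a b where ab: "L \<le> a" "a < b" "norm (ph (r a) - ph (r b)) \<le> e"
    "(\<Sum>i<m. norm (z (r a) i - z (r b) i) powr q) \<le> e"
    using pair_exists[OF e, of L m] by blast
  obtain hi where hi: "hi \<ge> m" "(\<Sum>i. norm (WW a b (i + hi)) powr q) \<le> tt n / 2"
    using tail_small[OF WW_lp[of a b], of "tt n / 2" m] tt_pos[of n] by auto
  have "Pn n (a, b, m, hi)" unfolding Pn_def using ab hi by (auto simp: e_def WW_def)
  then show ?thesis using ab by blast
qed

lemma seq_ex: "\<exists>f. \<forall>n. Pn n (f n) \<and> Qn n (f n) (f (Suc n))"
proof (rule dependent_nat_choice)
  show "\<exists>x. Pn 0 x" using step_ex by blast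
next
  fix x n assume "Pn n x"
  obtain a b lo hi where x: "x = (a, b, lo, hi)" by (cases x) auto
  obtain a' b' lo' hi' where "Pn (Suc n) (a', b', lo', hi') \<and> Suc b \<le> a' \<and> hi \<le> lo'"
    using step_ex by blast
  then show "\<exists>y. Pn (Suc n) y \<and> Qn n x y" unfolding x Qn_def
    by (intro exI[of _ "(a', b', lo', hi')"]) auto
qed

definition SQ where "SQ = (SOME f. \<forall>n. Pn n (f n) \<and> Qn n (f n) (f (Suc n)))"
definition A where "A n = fst (SQ n)"
definition B where "B n = fst (snd (SQ n))"
definition LO where "LO n = fst (snd (snd (SQ n)))"
definition HI where "HI n = snd (snd (snd (SQ n)))"

lemma SQ: "Pn n (A n, B n, LO n, HI n)" "Qn n (A n, B n, LO n, HI n) (A (Suc n), B (Suc n), LO (Suc n), HI (Suc n))"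
  using someI_ex[OF seq_ex] unfolding SQ_def[symmetric] A_def B_def LO_def HI_def by auto

lemma AB: "A n < B n" "LO n \<le> HI n" "norm (ph (r (A n)) - ph (r (B n))) \<le> eta * (1/2)^(n+1)"
  "(\<Sum>i<LO n. norm (WW (A n) (B n) i) powr q) \<le> tt n / 2"
  "(\<Sum>i. norm (WW (A n) (B n) (i + HI n)) powr q) \<le> tt n / 2"
  "B n < A (Suc n)" "HI n \<le> LO (Suc n)"
  using SQ[of n] unfolding Pn_def Qn_def by auto

lemma mono_AB: "j < n \<Longrightarrow> B j < A n \<and> HI j \<le> LO n"
proof (induction n)
  case 0 then show ?case by simp
next
  case (Suc n)
  show ?case
  proof (cases "j = n")
    case True then show ?thesis using AB[of n] by simp
  next
    case False
    then have "B j < A n \<and> HI j \<le> LO n" using Suc by auto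
    then show ?thesis using AB[of n] by auto
  qed
qed

end



context coreloc begin

definition W where "W j = WW (A j) (B j)"
definition V where "V j = ph (r (A j)) - ph (r (B j))"
definition beta where "beta j = (\<lambda>i. if LO j \<le> i \<and> i < HI j then W j i else 0)"
definition eps where "eps j = (\<lambda>i. if LO j \<le> i \<and> i < HI j then 0 else W j i)"
definition D where "D j = (\<lambda>n. ev (r (A j)) n - ev (r (B j)) n)"

lemma W_lp: "W j \<in> lp q" by (simp add: W_def WW_lp)

lemma beta_lp: "beta j \<in> lp q \<and> lp_norm q (beta j) \<le> lp_norm q (W j)"
  using q by (intro lp_mono[OF W_lp]) (auto simp: beta_def)

lemma eps_lp: "eps j \<in> lp q"
  using q lp_mono[OF W_lp[of j], of "eps j"] by (auto simp: eps_def)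

lemma W_split: "W j = (\<lambda>i. beta j i + eps j i)"
  by (auto simp: beta_def eps_def fun_eq_iff)

lemma eps_norm: "lp_norm q (eps j) \<le> eta * (1/2)^(j+1)"
proof -
  define G where "G = (\<lambda>i. norm (eps j i) powr q)"
  have sG: "summable G" using lp_summable[OF eps_lp[of j]] by (simp add: G_def)
  have t: "(\<lambda>i. G (i + HI j)) = (\<lambda>i. norm (WW (A j) (B j) (i + HI j)) powr q)"
    by (auto simp: G_def eps_def W_def fun_eq_iff)
  have h: "(\<Sum>i<HI j. G i) = (\<Sum>i<LO j. G i)"
    by (rule sum.mono_neutral_right) (use AB(2)[of j] in \<open>auto simp: G_def eps_def\<close>)
  have h2: "(\<Sum>i<LO j. G i) = (\<Sum>i<LO j. norm (WW (A j) (B j) i) powr q)"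
    by (auto simp: G_def eps_def W_def)
  have "suminf G = (\<Sum>i. G (i + HI j)) + (\<Sum>i<HI j. G i)" by (rule suminf_split_initial_segment[OF sG])
  also have "\<dots> \<le> tt j / 2 + tt j / 2" using AB(4,5)[of j] t h h2 by simp
  finally have le: "suminf G \<le> tt j" by simp
  have "lp_norm q (eps j) = (suminf G) powr (1/q)" by (simp add: lp_norm_def G_def)
  also have "\<dots> \<le> tt j powr (1/q)" using le q suminf_nonneg[OF sG] by (intro powr_mono2) (auto simp: G_def)
  also have "\<dots> = eta * (1/2)^(j+1)" using eta_pos q by (simp add: tt_def powr_powr)
  finally show ?thesis .
qed

lemma rA_ne_rB: "r (A j) \<noteq> r (B j)"
  using RG(1) AB(1)[of j] by (metis less_not_refl strict_mono_def)

lemma D_lp: "D j \<in> lp p \<and> lp_norm p (D j) = 2 powr (1/p)"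
proof -
  have "D j \<in> lp p \<and> lp_norm p (D j) = real (card {r (A j), r (B j)}) powr (1/p)"
    using p rA_ne_rB[of j] by (intro lp_indicator) (auto simp: D_def ev_def)
  then show ?thesis using rA_ne_rB[of j] by simp
qed

lemma Dcar: "(D j, 0) \<in> ds_carrier p" using D_lp by (simp add: ds_carrier_def)

lemma FD: "F (D j, 0) = (W j, V j)" unfolding D_def W_def V_def WW_def using Fd by simp

lemma ds_lower: "c0 \<le> ds_norm q (W j, V j)"
proof -
  have "2 powr (1/p) \<le> CG * ds_norm q (W j, V j)"
    using lower[OF Dcar[of j]] D_lp[of j] by (simp add: ds_norm_0 FD)
  then show ?thesis using CG(1) by (simp add: c0_def field_simps)
qed

lemma ds_upper: "ds_norm q (W j, V j) \<le> CF * 2 powr (1/p)"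
  using CF(2)[OF Dcar[of j]] D_lp[of j] by (simp add: ds_norm_0 FD)

lemma beta_lower: "c0 / 2 \<le> lp_norm q (beta j)"
proof -
  have "c0 \<le> ds_norm q (W j, V j)" by (rule ds_lower)
  also have "\<dots> \<le> lp_norm q (W j) + norm (V j)" by (rule ds_norm_le)
  also have "lp_norm q (W j) \<le> lp_norm q (beta j) + lp_norm q (eps j)"
    using minkowski[OF conjunct1[OF beta_lp] eps_lp q] W_split[of j] by simp
  finally have 1: "c0 \<le> lp_norm q (beta j) + lp_norm q (eps j) + norm (V j)" by simp
  have "(1/2::real)^(j+1) \<le> 1/2" by (simp add: power_le_one)
  then have "eta * (1/2)^(j+1) \<le> eta * (1/2)" using eta_pos by (intro mult_left_mono) auto
  then have "lp_norm q (eps j) + norm (V j) \<le> eta"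
    using eps_norm[of j] AB(3)[of j] by (simp add: V_def)
  with 1 show ?thesis by (simp add: eta_def)
qed

lemma beta_upper: "lp_norm q (beta j) \<le> CF * 2 powr (1/p)"
  using beta_lp[of j] ds_norm_ge[of q "W j" "V j"] ds_upper[of j] by simp

end



context coreloc begin

definition Dsum where "Dsum N = (\<lambda>n. \<Sum>j<N. D j n)"
definition Ind where "Ind N = (\<lambda>j. r (A j)) ` {..<N} \<union> (\<lambda>j. r (B j)) ` {..<N}"

lemma ind_less: "j < N \<Longrightarrow> r (A j) < r (A N) \<and> r (B j) < r (A N)"
  using mono_AB[of j N] AB(1)[of j] RG(1) by (meson order.strict_trans strict_monoD)

lemma rAB: "r (A N) < r (B N)" using AB(1)[of N] RG(1) by (simp add: strict_monoD)

lemma Dsum_pt: "(\<forall>n. norm (Dsum N n) = (if n \<in> Ind N then 1 else 0)) \<and> card (Ind N) = 2 * N"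
proof (induction N)
  case 0
  then show ?case by (simp add: Dsum_def Ind_def)
next
  case (Suc N)
  have notin: "r (A N) \<notin> Ind N" "r (B N) \<notin> Ind N"
    using ind_less[of _ N] rAB[of N] unfolding Ind_def by (auto, (metis less_irrefl order.strict_trans)+)
  have I: "Ind (Suc N) = insert (r (A N)) (insert (r (B N)) (Ind N))"
    by (auto simp: Ind_def lessThan_Suc)
  have ds: "Dsum (Suc N) n = Dsum N n + D N n" for n by (simp add: Dsum_def)
  have z0: "Dsum N n = 0" if "n \<notin> Ind N" for n using Suc.IH that by (metis norm_eq_zero)
  have "norm (Dsum (Suc N) n) = (if n \<in> Ind (Suc N) then 1 else 0)" for n
  proof -
    consider "n = r (A N)" | "n = r (B N)" | "n \<noteq> r (A N) \<and> n \<noteq> r (B N)" by blast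
    then show ?thesis
    proof cases
      case 1 then show ?thesis using ds[of n] z0[of n] notin rAB[of N] by (simp add: D_def ev_def I)
    next
      case 2 then show ?thesis using ds[of n] z0[of n] notin rAB[of N] by (simp add: D_def ev_def I)
    next
      case 3 then show ?thesis using ds[of n] Suc.IH by (simp add: D_def ev_def I)
    qed
  qed
  moreover have "card (Ind (Suc N)) = 2 * Suc N"
  proof -
    have "finite (Ind N)" by (simp add: Ind_def)
    then show ?thesis using Suc.IH notin rAB[of N] by (simp add: I)
  qed
  ultimately show ?case by blast
qed

lemma Dsum_lp: "Dsum N \<in> lp p \<and> lp_norm p (Dsum N) = (2 * real N) powr (1/p)"
proof -
  have "finite (Ind N)" by (simp add: Ind_def)
  from lp_indicator[OF this, of "Dsum N" p] Dsum_pt[of N] p show ?thesis by auto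
qed

lemma FDsum: "F (Dsum N, 0) = ((\<lambda>n. \<Sum>j<N. W j n), (\<Sum>j<N. V j))"
proof (induction N)
  case 0
  have "(Dsum 0, 0::'x) = ds_scale 0 (ev 0, 0)" by (simp add: Dsum_def ds_scale_def cscale_zero fun_eq_iff)
  moreover have "F (ds_scale 0 (ev 0, 0)) = ds_scale 0 (F (ev 0, 0))" using F evcar[of 0] unfolding ds_bounded_op_def by blast
  moreover have "ds_scale 0 (w :: (nat \<Rightarrow> complex) \<times> 'y) = ((\<lambda>n. 0), 0)" for w
    using cscale_of_real[of 0 "snd w"] by (simp add: ds_scale_def)
  ultimately show ?case by simp
next
  case (Suc N)
  have c1: "(Dsum N, 0::'x) \<in> ds_carrier p" using Dsum_lp by (simp add: ds_carrier_def)
  have e: "(Dsum (Suc N), 0::'x) = ds_add (Dsum N, 0) (D N, 0)" by (simp add: ds_add_def Dsum_def)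
  show ?case unfolding e lin_add[OF F c1 Dcar] Suc.IH FD by (simp add: ds_add_def)
qed

end



context coreloc begin

definition C1 where "C1 = CF * 2 powr (1/p)"

lemma bounds:
  fixes N :: nat
  shows "(1/CG) * real N powr (1/p) \<le> C1 * real N powr (1/q) + 2"
    and "(c0/2) * real N powr (1/q) \<le> C1 * real N powr (1/p) + 1"
proof -
  define SW where "SW = (\<lambda>n. \<Sum>j<N. W j n)"
  define Sb where "Sb = (\<lambda>n. \<Sum>j<N. beta j n)"
  define Se where "Se = (\<lambda>n. \<Sum>j<N. eps j n)"
  define ds where "ds = ds_norm q (F (Dsum N, 0::'x))"
  have SWe: "SW = (\<lambda>n. Sb n + Se n)" unfolding SW_def Sb_def Se_def
    by (subst W_split) (simp add: sum.distrib)
  have Se: "Se \<in> lp q" "lp_norm q Se \<le> 1"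
  proof -
    from lp_sum_fin[of N eps q] eps_lp q
    have 1: "Se \<in> lp q \<and> lp_norm q Se \<le> (\<Sum>j<N. lp_norm q (eps j))" by (simp add: Se_def)
    have "(\<Sum>j<N. lp_norm q (eps j)) \<le> (\<Sum>j<N. eta * (1/2)^(j+1))" by (intro sum_mono eps_norm)
    also have "\<dots> = eta * (\<Sum>j<N. (1/2)^(j+1))" by (simp add: sum_distrib_left)
    also have "\<dots> \<le> eta * 1" using eta_pos geom_sum_le[of N] by (intro mult_left_mono) auto
    also have "\<dots> \<le> 1" by (simp add: eta_def)
    finally show "Se \<in> lp q" "lp_norm q Se \<le> 1" using 1 by auto
  qed
  have Vb: "norm (\<Sum>j<N. V j) \<le> 1"
  proof -
    have "norm (\<Sum>j<N. V j) \<le> (\<Sum>j<N. norm (V j))" by (rule norm_sum)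
    also have "\<dots> \<le> (\<Sum>j<N. eta * (1/2)^(j+1))" using AB(3) by (intro sum_mono) (simp add: V_def)
    also have "\<dots> = eta * (\<Sum>j<N. (1/2)^(j+1))" by (simp add: sum_distrib_left)
    also have "\<dots> \<le> eta * 1" using eta_pos geom_sum_le[of N] by (intro mult_left_mono) auto
    also have "\<dots> \<le> 1" by (simp add: eta_def)
    finally show ?thesis .
  qed
  have disj: "beta k n = 0" if "j < N" "k < N" "j \<noteq> k" "beta j n \<noteq> 0" for j k n
  proof -
    have jn: "LO j \<le> n" "n < HI j" using that(4) by (auto simp: beta_def split: if_splits)
    show ?thesis
    proof (cases "j < k")
      case True
      then have "HI j \<le> LO k" using mono_AB[of j k] by simp
      then show ?thesis using jn by (simp add: beta_def)
    next
      case False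
      then have "k < j" using that(3) by simp
      then have "HI k \<le> LO j" using mono_AB[of k j] by simp
      then show ?thesis using jn by (simp add: beta_def)
    qed
  qed
  have Sbn: "Sb \<in> lp q \<and> lp_norm q Sb = (\<Sum>j<N. lp_norm q (beta j) powr q) powr (1/q)"
    unfolding Sb_def using q beta_lp disj by (intro lp_disjoint_sum) auto
  have bl: "(c0/2) powr q \<le> lp_norm q (beta j) powr q" for j
    using beta_lower[of j] c0_pos q by (intro powr_mono2) auto
  have bu: "lp_norm q (beta j) powr q \<le> C1 powr q" for j
    using beta_upper[of j] lp_norm_nonneg q by (intro powr_mono2) (auto simp: C1_def)
  have C1: "C1 > 0" using CF(1) by (simp add: C1_def)
  have Sb_lo: "(c0/2) * real N powr (1/q) \<le> lp_norm q Sb"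
  proof -
    have "real N * (c0/2) powr q \<le> (\<Sum>j<N. lp_norm q (beta j) powr q)"
      using sum_mono[of "{..<N}" "\<lambda>_. (c0/2) powr q", OF bl] by simp
    then have "(real N * (c0/2) powr q) powr (1/q) \<le> lp_norm q Sb"
      using Sbn q by (simp, intro powr_mono2) auto
    moreover have "(real N * (c0/2) powr q) powr (1/q) = real N powr (1/q) * (c0/2)"
      using c0_pos q by (simp add: powr_mult powr_powr)
    ultimately show ?thesis by (simp add: mult.commute)
  qed
  have Sb_up: "lp_norm q Sb \<le> C1 * real N powr (1/q)"
  proof -
    have "(\<Sum>j<N. lp_norm q (beta j) powr q) \<le> real N * C1 powr q"
      using sum_mono[of "{..<N}" _ "\<lambda>_. C1 powr q", OF bu] by simp
    then have "lp_norm q Sb \<le> (real N * C1 powr q) powr (1/q)"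
      using Sbn q by (simp, intro powr_mono2) (auto intro: sum_nonneg)
    moreover have "(real N * C1 powr q) powr (1/q) = real N powr (1/q) * C1"
      using C1 q by (simp add: powr_mult powr_powr)
    ultimately show ?thesis by (simp add: mult.commute)
  qed
  have SW1: "lp_norm q SW \<le> lp_norm q Sb + 1"
    using minkowski[OF conjunct1[OF Sbn] Se(1) q] Se(2) SWe by simp
  have SWlp: "SW \<in> lp q" using minkowski[OF conjunct1[OF Sbn] Se(1) q] SWe by simp
  have SW2: "lp_norm q Sb \<le> lp_norm q SW + 1"
  proof -
    have "Sb = (\<lambda>n. SW n - Se n)" using SWe by auto
    then show ?thesis using minkowski_diff[OF SWlp Se(1) q] Se(2) by simp
  qed
  have dsF: "ds = ds_norm q (SW, \<Sum>j<N. V j)" unfolding ds_def FDsum SW_def ..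
  have ds1: "lp_norm q SW \<le> ds" using ds_norm_ge dsF by simp
  have ds2: "ds \<le> lp_norm q SW + 1" using ds_norm_le[of q SW "\<Sum>j<N. V j"] Vb dsF by simp
  have cD: "(Dsum N, 0::'x) \<in> ds_carrier p" using Dsum_lp by (simp add: ds_carrier_def)
  have lowD: "(2 * real N) powr (1/p) \<le> CG * ds"
    using lower[OF cD] Dsum_lp[of N] by (simp add: ds_norm_0 ds_def)
  have upD: "ds \<le> CF * (2 * real N) powr (1/p)"
    using CF(2)[OF cD] Dsum_lp[of N] by (simp add: ds_norm_0 ds_def)
  have twoN: "(2 * real N) powr (1/p) = 2 powr (1/p) * real N powr (1/p)" by (simp add: powr_mult)
  have Np: "real N powr (1/p) \<le> (2 * real N) powr (1/p)" using p by (intro powr_mono2) auto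
  have "real N powr (1/p) \<le> CG * ds" using Np lowD by simp
  then have "(1/CG) * real N powr (1/p) \<le> ds" using CG(1) by (simp add: field_simps)
  also have "\<dots> \<le> C1 * real N powr (1/q) + 2" using ds2 SW1 Sb_up by simp
  finally show "(1/CG) * real N powr (1/p) \<le> C1 * real N powr (1/q) + 2" .
  have "(c0/2) * real N powr (1/q) \<le> ds + 1" using Sb_lo SW2 ds1 by simp
  also have "\<dots> \<le> C1 * real N powr (1/p) + 1" using upD twoN by (simp add: C1_def mult.assoc)
  finally show "(c0/2) * real N powr (1/q) \<le> C1 * real N powr (1/p) + 1" .
qed

theorem contradiction: False
proof (cases "p < q")
  case True
  have "1/q < 1/p" using True p by (simp add: frac_less2)
  then show False using growth_contra[of "1/q" "1/p" "1/CG" C1 2] bounds(1) CG(1) CF(1) q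
    by (auto simp: C1_def)
next
  case False
  then have "q < p" using pq by simp
  then have "1/p < 1/q" using q by (simp add: frac_less2)
  then show False using growth_contra[of "1/p" "1/q" "c0/2" C1 1] bounds(2) c0_pos CF(1) p
    by (auto simp: C1_def)
qed

end



theorem proposition4p5:
  fixes p q :: real
    and T S :: "(nat \<Rightarrow> complex) \<Rightarrow> (nat \<Rightarrow> complex)"
    and E :: "(nat \<Rightarrow> complex) \<times> 'y::complex_banach \<Rightarrow> (nat \<Rightarrow> complex) \<times> 'x::complex_banach"
    and F :: "(nat \<Rightarrow> complex) \<times> 'x \<Rightarrow> (nat \<Rightarrow> complex) \<times> 'y"
  assumes "1 \<le> p" and "1 \<le> q" and "p \<noteq> q"
    and "lp_bounded_op p p T" and "lp_bounded_op q q S"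
    and "lp_compact_op p T \<or> lp_compact_op q S"
  shows "\<not> eae_witness p q T S E F"
proof
  assume W: "eae_witness p q T S E F"
  have Eb: "ds_bounded_op q p E" and Fb: "ds_bounded_op p q F"
    and rel: "\<forall>u\<in>ds_carrier p. ds_diag T u = E (ds_diag S (F u))"
    using W by (auto simp: eae_witness_def ds_invertible_def)
  obtain GE where GE: "ds_bounded_op p q GE" "\<forall>u\<in>ds_carrier q. GE (E u) = u"
    using W by (auto simp: eae_witness_def ds_invertible_def)
  obtain GF where GF: "ds_bounded_op q p GF" "\<forall>u\<in>ds_carrier p. GF (F u) = u" "\<forall>v\<in>ds_carrier q. F (GF v) = v"
    using W by (auto simp: eae_witness_def ds_invertible_def)
  from assms(6) show False
  proof
    assume Tc: "lp_compact_op p T"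
    have rel': "\<forall>e\<in>lp p. snd (F (e, 0)) = snd (GE (T e, 0))"
    proof
      fix e assume e: "e \<in> lp p"
      have u: "(e, 0::'x) \<in> ds_carrier p" using e by (simp add: ds_carrier_def)
      then have Fu: "F (e, 0) \<in> ds_carrier q" using Fb by (simp add: ds_bounded_op_def)
      then have "ds_diag S (F (e, 0)) \<in> ds_carrier q"
        using assms(5) by (auto simp: ds_diag_def ds_carrier_def lp_bounded_op_def)
      then have "GE (E (ds_diag S (F (e, 0)))) = ds_diag S (F (e, 0))" using GE(2) by simp
      moreover have "ds_diag T (e, 0::'x) = E (ds_diag S (F (e, 0)))" using rel u by simp
      ultimately have "GE (T e, 0) = ds_diag S (F (e, 0))" by (simp add: ds_diag_def)
      then show "snd (F (e, 0)) = snd (GE (T e, 0))" by (simp add: ds_diag_def)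
    qed
    interpret coreloc p q T F GF
      using assms(1,2,3) Tc Fb GF(1,2) phi_lemma[OF GE(1) assms(4) assms(1) rel']
      by unfold_locales auto
    show False by (rule contradiction)
  next
    assume Sc: "lp_compact_op q S"
    have rel': "\<forall>e\<in>lp q. snd (GF (e, 0)) = snd (E (S e, 0))"
    proof
      fix e assume e: "e \<in> lp q"
      have v: "(e, 0::'y) \<in> ds_carrier q" using e by (simp add: ds_carrier_def)
      then have Gv: "GF (e, 0) \<in> ds_carrier p" using GF(1) by (simp add: ds_bounded_op_def)
      have "ds_diag T (GF (e, 0)) = E (ds_diag S (F (GF (e, 0))))" using rel Gv by simp
      also have "\<dots> = E (S e, 0)" using GF(3) v by (simp add: ds_diag_def)
      finally show "snd (GF (e, 0)) = snd (E (S e, 0))" by (simp add: ds_diag_def) (metis snd_conv)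
    qed
    interpret coreloc q p S GF F
      using assms(1,2,3) Sc Fb GF(1,3) phi_lemma[OF Eb assms(5) assms(2) rel']
      by unfold_locales auto
    show False by (rule contradiction)
  qed
qed



end
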